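(* Let $X=(\mathbb C^\times)^3$ with coordinates $x=(x_{22},x_{11},x_{21})$. For $c\in\mathbb C^\times$ put $c_2=\dfrac{c\,x_{21}x_{22}+x_{11}^2}{x_{21}x_{22}+x_{11}^2}$ and define $$e_0^c(x)=\Big(\tfrac{c_2}{c}x_{22},\ \tfrac{x_{11}}{c},\ \tfrac{x_{21}}{c_2}\Big),\quad e_1^c(x)=(x_{22},\,c\,x_{11},\,x_{21}),\quad e_2^c(x)=\Big(c_2x_{22},\ x_{11},\ \tfrac{c}{c_2}x_{21}\Big),$$ $$\varepsilon_0(x)=x_{21}+\frac{x_{11}^2}{x_{22}},\quad \varepsilon_1(x)=\frac{x_{22}}{x_{11}},\quad \varepsilon_2(x)=\frac{x_{21}x_{22}+x_{11}^2}{x_{22}^2x_{21}},$$ $$\gamma_0(x)=\frac1{x_{11}^2},\quad \gamma_1(x)=\frac{x_{11}^2}{x_{21}x_{22}},\quad \gamma_2(x)=\frac{x_{21}^2x_{22}^2}{x_{11}^2}.$$ Then $(X,\{e_i\}_{i=0,1,2},\{\gamma_i\}_{i=0,1,2},\{\varepsilon_i\}_{i=0,1,2})$ is a positive geometric crystal for the affine Lie algebra $C_2^{(1)}$.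
   Context: The generalized Cartan matrix $(a_{ij})_{i,j\in\{0,1,2\}}$ of $C_2^{(1)}$ has $a_{ii}=2$, $a_{01}=-1$, $a_{10}=-2$, $a_{12}=-2$, $a_{21}=-1$, $a_{02}=a_{20}=0$. A geometric crystal for an affine Lie algebra with index set $I$ and Cartan matrix $(a_{ij})$ is a quadruple $(X,\{e_i\},\{\gamma_i\},\{\varepsilon_i\})$ where $X$ is an (ind-)variety, $e_i:\mathbb C^\times\times X\to X$, $(c,x)\mapsto e_i^c(x)$, are rational $\mathbb C^\times$-actions, and $\gamma_i,\varepsilon_i:X\to\mathbb C$ are rational functions such that: (1) $\{1\}\times X\cap\mathrm{dom}(e_i)$ is open dense in $\{1\}\times X$; (2) $\gamma_j(e_i^c(x))=c^{a_{ij}}\gamma_j(x)$; (3) $\varepsilon_i(e_i^c(x))=c^{-1}\varepsilon_i(x)$, and $\varepsilon_i(e_j^c(x))=\varepsilon_i(x)$ if $a_{ij}=a_{ji}=0$; (4) $e_i^{c_1}e_j^{c_2}=e_j^{c_2}e_i^{c_1}$ if $a_{ij}=a_{ji}=0$; $e_i^{c_1}e_j^{c_1c_2}e_i^{c_2}=e_j^{c_2}e_i^{c_1c_2}e_j^{c_1}$ if $a_{ij}=a_{ji}=-1$; $e_i^{c_1}e_j^{c_1^2c_2}e_i^{c_1c_2}e_j^{c_2}=e_j^{c_2}e_i^{c_1c_2}e_j^{c_1^2c_2}e_i^{c_1}$ if $a_{ij}=-2,a_{ji}=-1$; and the analogous length-six relation if $a_{ij}=-3,a_{ji}=-1$. It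 is positive if all the maps $e_i^c$ (coordinatewise), $\varepsilon_i$, $\gamma_i$ are given by ratios of polynomials (in the coordinates and $c$) with positive coefficients. *)

theory Defs
  imports "HOL-Analysis.Analysis"
begin

definition cartanC21 :: "nat \<Rightarrow> nat \<Rightarrow> int" where
  "cartanC21 i j =
     (if i = j then 2
      else if (i, j) = (0, 1) then -1
      else if (i, j) = (1, 0) then -2
      else if (i, j) = (1, 2) then -2
      else if (i, j) = (2, 1) then -1
      else 0)"

fun app_word :: "(nat \<Rightarrow> complex \<Rightarrow> 'a \<Rightarrow> 'a) \<Rightarrow> (nat \<times> complex) list \<Rightarrow> 'a \<Rightarrow> 'a" where
  "app_word e [] x = x"
| "app_word e ((i, c) # w) x = e i c (app_word e w x)"

fun defd_word :: "(nat \<Rightarrow> (complex \<times> 'a) set) \<Rightarrow> (nat \<Rightarrow> complex \<Rightarrow> 'a \<Rightarrow> 'a)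
                   \<Rightarrow> (nat \<times> complex) list \<Rightarrow> 'a \<Rightarrow> bool" where
  "defd_word De e [] x = True"
| "defd_word De e ((i, c) # w) x = (defd_word De e w x \<and> (c, app_word e w x) \<in> De i)"

definition word_eq :: "(nat \<Rightarrow> (complex \<times> 'a) set) \<Rightarrow> (nat \<Rightarrow> complex \<Rightarrow> 'a \<Rightarrow> 'a) \<Rightarrow> 'a set
                       \<Rightarrow> (nat \<times> complex) list \<Rightarrow> (nat \<times> complex) list \<Rightarrow> bool" where
  "word_eq De e X v w =
     (\<forall>x\<in>X. defd_word De e v x \<and> defd_word De e w x \<longrightarrow> app_word e v x = app_word e w x)"

definition open_dense_in :: "'a::topological_space set \<Rightarrow> 'a set \<Rightarrow> bool" where
  "open_dense_in D S \<longleftrightarrow> D \<subseteq> S \<and> openin (top_of_set S) D \<and> S \<subseteq> closure D"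

(* The rational maps are represented by functions together with their domains of
   definition De i (for e_i), Dg i (for gamma_i), Deps i (for epsilon_i);
   identities of rational maps are required wherever all terms are defined. *)
definition geometric_crystal ::
  "(nat \<Rightarrow> nat \<Rightarrow> int) \<Rightarrow> nat set \<Rightarrow> 'a::topological_space set
   \<Rightarrow> (nat \<Rightarrow> (complex \<times> 'a) set) \<Rightarrow> (nat \<Rightarrow> complex \<Rightarrow> 'a \<Rightarrow> 'a)
   \<Rightarrow> (nat \<Rightarrow> 'a set) \<Rightarrow> (nat \<Rightarrow> 'a \<Rightarrow> complex)
   \<Rightarrow> (nat \<Rightarrow> 'a set) \<Rightarrow> (nat \<Rightarrow> 'a \<Rightarrow> complex) \<Rightarrow> bool" where
  "geometric_crystal a I X De e Dg gamma Deps eps \<longleftrightarrow>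
     (\<forall>i\<in>I.
        \<comment> \<open>rational maps: domains open dense, e_i maps into X\<close>
        open_dense_in (De i) ((- {0}) \<times> X) \<and>
        (\<forall>(c, x)\<in>De i. e i c x \<in> X) \<and>
        open_dense_in (Dg i) X \<and> open_dense_in (Deps i) X \<and>
        \<comment> \<open>rational C^x-action\<close>
        (\<forall>x\<in>X. (1, x) \<in> De i \<longrightarrow> e i 1 x = x) \<and>
        (\<forall>c1 c2. c1 \<noteq> 0 \<longrightarrow> c2 \<noteq> 0 \<longrightarrow>
            word_eq De e X [(i, c1), (i, c2)] [(i, c1 * c2)]) \<and>
        \<comment> \<open>(1)\<close>
        open_dense_in {x\<in>X. (1, x) \<in> De i} X \<and>
        \<comment> \<open>(2)\<close>
        (\<forall>j\<in>I. \<forall>(c, x)\<in>De i. x \<in> Dg j \<longrightarrow> e i c x \<in> Dg j \<longrightarrow>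
            gamma j (e i c x) = c powi (a i j) * gamma j x) \<and>
        \<comment> \<open>(3)\<close>
        (\<forall>(c, x)\<in>De i. x \<in> Deps i \<longrightarrow> e i c x \<in> Deps i \<longrightarrow>
            eps i (e i c x) = inverse c * eps i x) \<and>
        (\<forall>j\<in>I. a i j = 0 \<and> a j i = 0 \<longrightarrow>
            (\<forall>(c, x)\<in>De j. x \<in> Deps i \<longrightarrow> e j c x \<in> Deps i \<longrightarrow>
               eps i (e j c x) = eps i x)) \<and>
        \<comment> \<open>(4) Verma relations\<close>
        (\<forall>j\<in>I. \<forall>c1 c2. c1 \<noteq> 0 \<longrightarrow> c2 \<noteq> 0 \<longrightarrow>
           (a i j = 0 \<and> a j i = 0 \<longrightarrow>
              word_eq De e X [(i, c1), (j, c2)] [(j, c2), (i, c1)]) \<and>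
           (a i j = -1 \<and> a j i = -1 \<longrightarrow>
              word_eq De e X [(i, c1), (j, c1 * c2), (i, c2)] [(j, c2), (i, c1 * c2), (j, c1)]) \<and>
           (a i j = -2 \<and> a j i = -1 \<longrightarrow>
              word_eq De e X [(i, c1), (j, c1^2 * c2), (i, c1 * c2), (j, c2)]
                             [(j, c2), (i, c1 * c2), (j, c1^2 * c2), (i, c1)]) \<and>
           (a i j = -3 \<and> a j i = -1 \<longrightarrow>
              word_eq De e X
                [(i, c1), (j, c1^3 * c2), (i, c1^2 * c2), (j, c1^3 * c2^2), (i, c1 * c2), (j, c2)]
                [(j, c2), (i, c1 * c2), (j, c1^3 * c2^2), (i, c1^2 * c2), (j, c1^3 * c2), (i, c1)])))"

(* Polynomials with positive real coefficients in variables v!0, ..., v!(n-1):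
   a list of monomials (coefficient, exponent vector). *)
type_synonym pos_poly = "(real \<times> nat list) list"

definition is_pos_poly :: "nat \<Rightarrow> pos_poly \<Rightarrow> bool" where
  "is_pos_poly n P \<longleftrightarrow> (\<forall>(a, es)\<in>set P. a > 0 \<and> length es = n)"

definition eval_poly :: "pos_poly \<Rightarrow> complex list \<Rightarrow> complex" where
  "eval_poly P v = (\<Sum>(a, es)\<leftarrow>P. of_real a * (\<Prod>k<length es. (v ! k) ^ (es ! k)))"

definition pos_ratio_on :: "nat \<Rightarrow> complex list set \<Rightarrow> (complex list \<Rightarrow> complex) \<Rightarrow> bool" where
  "pos_ratio_on n D f \<longleftrightarrow>
     (\<exists>P Q. is_pos_poly n P \<and> is_pos_poly n Q \<and> Q \<noteq> [] \<and>
        (\<forall>v\<in>D. eval_poly Q v \<noteq> 0 \<and> f v = eval_poly P v / eval_poly Q v))"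

type_synonym pt3 = "complex \<times> complex \<times> complex"

definition coord3 :: "nat \<Rightarrow> pt3 \<Rightarrow> complex" where
  "coord3 k p = (case p of (a, b, d) \<Rightarrow> if k = 0 then a else if k = 1 then b else d)"

definition positive_geometric_crystal3 ::
  "(nat \<Rightarrow> nat \<Rightarrow> int) \<Rightarrow> nat set \<Rightarrow> pt3 set
   \<Rightarrow> (nat \<Rightarrow> (complex \<times> pt3) set) \<Rightarrow> (nat \<Rightarrow> complex \<Rightarrow> pt3 \<Rightarrow> pt3)
   \<Rightarrow> (nat \<Rightarrow> pt3 set) \<Rightarrow> (nat \<Rightarrow> pt3 \<Rightarrow> complex)
   \<Rightarrow> (nat \<Rightarrow> pt3 set) \<Rightarrow> (nat \<Rightarrow> pt3 \<Rightarrow> complex) \<Rightarrow> bool" where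
  "positive_geometric_crystal3 a I X De e Dg gamma Deps eps \<longleftrightarrow>
     geometric_crystal a I X De e Dg gamma Deps eps \<and>
     (\<forall>i\<in>I.
        (\<forall>k<3. pos_ratio_on 4 {[c, x0, x1, x2] | c x0 x1 x2. (c, (x0, x1, x2)) \<in> De i}
                 (\<lambda>v. coord3 k (e i (v ! 0) (v ! 1, v ! 2, v ! 3)))) \<and>
        pos_ratio_on 3 {[x0, x1, x2] | x0 x1 x2. (x0, x1, x2) \<in> Dg i}
                 (\<lambda>v. gamma i (v ! 0, v ! 1, v ! 2)) \<and>
        pos_ratio_on 3 {[x0, x1, x2] | x0 x1 x2. (x0, x1, x2) \<in> Deps i}
                 (\<lambda>v. eps i (v ! 0, v ! 1, v ! 2)))"

definition X3 :: "pt3 set" where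
  "X3 = {(x22, x11, x21). x22 \<noteq> 0 \<and> x11 \<noteq> 0 \<and> x21 \<noteq> 0}"

definition cc2 :: "complex \<Rightarrow> pt3 \<Rightarrow> complex" where
  "cc2 c x = (case x of (x22, x11, x21) \<Rightarrow>
      (c * x21 * x22 + x11^2) / (x21 * x22 + x11^2))"

definition eC :: "nat \<Rightarrow> complex \<Rightarrow> pt3 \<Rightarrow> pt3" where
  "eC i c x = (case x of (x22, x11, x21) \<Rightarrow>
      if i = 0 then (cc2 c x / c * x22, x11 / c, x21 / cc2 c x)
      else if i = 1 then (x22, c * x11, x21)
      else (cc2 c x * x22, x11, c / cc2 c x * x21))"

definition DeC :: "nat \<Rightarrow> (complex \<times> pt3) set" where
  "DeC i = (if i = 1 then {(c, x). c \<noteq> 0 \<and> x \<in> X3}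
            else {(c, x). c \<noteq> 0 \<and> x \<in> X3 \<and>
                    (case x of (x22, x11, x21) \<Rightarrow>
                       x21 * x22 + x11^2 \<noteq> 0 \<and> c * x21 * x22 + x11^2 \<noteq> 0)})"

definition epsC :: "nat \<Rightarrow> pt3 \<Rightarrow> complex" where
  "epsC i x = (case x of (x22, x11, x21) \<Rightarrow>
      if i = 0 then x21 + x11^2 / x22
      else if i = 1 then x22 / x11
      else (x21 * x22 + x11^2) / (x22^2 * x21))"

definition gammaC :: "nat \<Rightarrow> pt3 \<Rightarrow> complex" where
  "gammaC i x = (case x of (x22, x11, x21) \<Rightarrow>
      if i = 0 then 1 / x11^2
      else if i = 1 then x11^2 / (x21 * x22)
      else (x21^2 * x22^2) / x11^2)"

end

theory Submission
  imports Defs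
begin

lemma De0: "(c,(a,b,d)) \<in> DeC 0 \<longleftrightarrow> c\<noteq>0 \<and> a\<noteq>0 \<and> b\<noteq>0 \<and> d\<noteq>0 \<and> d*a+b^2\<noteq>0 \<and> c*d*a+b^2\<noteq>0"
  by (auto simp: DeC_def X3_def)
lemma De1: "(c,(a,b,d)) \<in> DeC 1 \<longleftrightarrow> c\<noteq>0 \<and> a\<noteq>0 \<and> b\<noteq>0 \<and> d\<noteq>0"
  by (auto simp: DeC_def X3_def)
lemma De2: "(c,(a,b,d)) \<in> DeC 2 \<longleftrightarrow> c\<noteq>0 \<and> a\<noteq>0 \<and> b\<noteq>0 \<and> d\<noteq>0 \<and> d*a+b^2\<noteq>0 \<and> c*d*a+b^2\<noteq>0"
  by (auto simp: DeC_def X3_def)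

lemma s0: "(c,(a,b,d)) \<in> DeC 0 \<Longrightarrow> d*a+b^2 = N \<Longrightarrow> c*d*a+b^2 = M \<Longrightarrow>
   eC 0 c (a,b,d) = (M*a/(c*N), b/c, d*N/M)"
  unfolding De0 by (simp add: eC_def cc2_def field_simps)
lemma s1: "eC 1 c (a,b,d) = (a, c*b, d)"
  by (simp add: eC_def)
lemma s1S: "eC (Suc 0) c (a,b,d) = (a, c*b, d)"
  by (simp add: eC_def)
lemma s2: "(c,(a,b,d)) \<in> DeC 2 \<Longrightarrow> d*a+b^2 = N \<Longrightarrow> c*d*a+b^2 = M \<Longrightarrow>
   eC 2 c (a,b,d) = (M*a/N, b, c*d*N/M)"
  unfolding De2 by (simp add: eC_def cc2_def field_simps)

lemma v10: "word_eq DeC eC X3 [(1, c1), (0, c1^2 * c2), (1, c1 * c2), (0, c2)]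
                             [(0, c2), (1, c1 * c2), (0, c1^2 * c2), (1, c1)]"
  unfolding word_eq_def
proof (intro ballI impI, elim conjE)
  fix x assume "x \<in> X3" and h1: "defd_word DeC eC [(1, c1), (0, c1^2 * c2), (1, c1 * c2), (0, c2)] x"
    and h2: "defd_word DeC eC [(0, c2), (1, c1 * c2), (0, c1^2 * c2), (1, c1)] x"
  obtain a b d where x: "x = (a,b,d)" by (cases x) auto
  have H: "(c2,(a,b,d)) \<in> DeC 0" "(c1*c2, eC 0 c2 (a,b,d)) \<in> DeC 1"
     "(c1^2*c2, eC 1 (c1*c2) (eC 0 c2 (a,b,d))) \<in> DeC 0"
     "(c1, eC 0 (c1^2*c2) (eC 1 (c1*c2) (eC 0 c2 (a,b,d)))) \<in> DeC 1"
    using h1 unfolding x by simp_all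
  have G: "(c1,(a,b,d)) \<in> DeC 1" "(c1^2*c2, eC 1 c1 (a,b,d)) \<in> DeC 0"
     "(c1*c2, eC 0 (c1^2*c2) (eC 1 c1 (a,b,d))) \<in> DeC 1"
     "(c2, eC 1 (c1*c2) (eC 0 (c1^2*c2) (eC 1 c1 (a,b,d)))) \<in> DeC 0"
    using h2 unfolding x by simp_all
  define N where "N = d*a+b^2"
  define M1 where "M1 = c2*d*a+b^2"
  define K where "K = d*a+c1^2*c2*b^2"
  define L where "L = d*a+c1^2*b^2"
  have nz: "a\<noteq>0" "b\<noteq>0" "d\<noteq>0" "c2\<noteq>0" "N\<noteq>0" "M1\<noteq>0" "c1\<noteq>0"
    using H(1) G(1) unfolding De0 De1 N_def M1_def by auto
  have P1: "eC 0 c2 (a,b,d) = (M1*a/(c2*N), b/c2, d*N/M1)"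
    using s0[OF H(1)] N_def M1_def by simp
  have P2: "eC 1 (c1*c2) (M1*a/(c2*N), b/c2, d*N/M1) = (M1*a/(c2*N), c1*b, d*N/M1)"
    using nz by (simp add: s1 s1S)
  have H3: "(c1^2*c2, (M1*a/(c2*N), c1*b, d*N/M1)) \<in> DeC 0" using H(3) P1 P2 by simp
  have e1: "d*N/M1*(M1*a/(c2*N)) + (c1*b)^2 = K/c2" using nz unfolding K_def by (simp add: field_simps)
  have e2: "c1^2*c2*(d*N/M1)*(M1*a/(c2*N)) + (c1*b)^2 = c1^2*N"
  proof -
    have "c1^2*c2*(d*N/M1)*(M1*a/(c2*N)) + (c1*b)^2 = c1^2*(d*a+b^2)" using nz by (simp add: field_simps)
    then show ?thesis unfolding N_def .
  qed
  have nzK: "K \<noteq> 0" using H3 e1 nz unfolding De0 by auto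
  have P3: "eC 0 (c1^2*c2) (M1*a/(c2*N), c1*b, d*N/M1) = (M1*a/(c2*K), b/(c1*c2), d*K/(c1^2*c2*M1))"
    using s0[OF H3 e1 e2] nz nzK by (simp add: field_simps power2_eq_square)
  have LHS: "app_word eC [(1, c1), (0, c1^2 * c2), (1, c1 * c2), (0, c2)] x = (M1*a/(c2*K), b/c2, d*K/(c1^2*c2*M1))"
    unfolding x using P1 P2 P3 nz by (simp add: s1 s1S)
  have Q1: "eC 1 c1 (a,b,d) = (a, c1*b, d)" by (simp add: s1 s1S)
  have G2: "(c1^2*c2, (a, c1*b, d)) \<in> DeC 0" using G(2) Q1 by simp
  have nzL: "L \<noteq> 0" using G2 unfolding De0 L_def by (simp add: power_mult_distrib)
  have Q2: "eC 0 (c1^2*c2) (a, c1*b, d) = (M1*a/(c2*L), b/(c1*c2), d*L/(c1^2*M1))"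
  proof -
    have g1: "d*a + (c1*b)^2 = L" unfolding L_def by (simp add: power_mult_distrib)
    have g2: "c1^2*c2*d*a + (c1*b)^2 = c1^2*M1" unfolding M1_def by (simp add: algebra_simps power_mult_distrib)
    show ?thesis using s0[OF G2 g1 g2] nz nzL by (simp add: field_simps power2_eq_square)
  qed
  have Q3: "eC 1 (c1*c2) (M1*a/(c2*L), b/(c1*c2), d*L/(c1^2*M1)) = (M1*a/(c2*L), b, d*L/(c1^2*M1))"
    using nz by (simp add: s1 s1S)
  have G4: "(c2, (M1*a/(c2*L), b, d*L/(c1^2*M1))) \<in> DeC 0" using G(4) Q1 Q2 Q3 by simp
  have f1: "d*L/(c1^2*M1)*(M1*a/(c2*L)) + b^2 = K/(c1^2*c2)" using nz nzL unfolding K_def by (simp add: field_simps)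
  have f2: "c2*(d*L/(c1^2*M1))*(M1*a/(c2*L)) + b^2 = L/c1^2"
  proof -
    have "c2*(d*L/(c1^2*M1))*(M1*a/(c2*L)) + b^2 = (d*a+c1^2*b^2)/c1^2" using nz nzL by (simp add: field_simps)
    then show ?thesis unfolding L_def .
  qed
  have Q4: "eC 0 c2 (M1*a/(c2*L), b, d*L/(c1^2*M1)) = (M1*a/(c2*K), b/c2, d*K/(c1^2*c2*M1))"
    using s0[OF G4 f1 f2] nz nzL nzK by (simp add: field_simps power2_eq_square)
  have RHS: "app_word eC [(0, c2), (1, c1 * c2), (0, c1^2 * c2), (1, c1)] x = (M1*a/(c2*K), b/c2, d*K/(c1^2*c2*M1))"
    unfolding x using Q1 Q2 Q3 Q4 by simp
  show "app_word eC [(1, c1), (0, c1^2 * c2), (1, c1 * c2), (0, c2)] x = app_word eC [(0, c2), (1, c1 * c2), (0, c1^2 * c2), (1, c1)] x"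
    using LHS RHS by simp
qed
lemma v12: "word_eq DeC eC X3 [(1, c1), (2, c1^2 * c2), (1, c1 * c2), (2, c2)]
                             [(2, c2), (1, c1 * c2), (2, c1^2 * c2), (1, c1)]"
  unfolding word_eq_def
proof (intro ballI impI, elim conjE)
  fix x assume "x \<in> X3" and h1: "defd_word DeC eC [(1, c1), (2, c1^2 * c2), (1, c1 * c2), (2, c2)] x"
    and h2: "defd_word DeC eC [(2, c2), (1, c1 * c2), (2, c1^2 * c2), (1, c1)] x"
  obtain a b d where x: "x = (a,b,d)" by (cases x) auto
  have H: "(c2,(a,b,d)) \<in> DeC 2" "(c1*c2, eC 2 c2 (a,b,d)) \<in> DeC 1"
     "(c1^2*c2, eC 1 (c1*c2) (eC 2 c2 (a,b,d))) \<in> DeC 2"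
     "(c1, eC 2 (c1^2*c2) (eC 1 (c1*c2) (eC 2 c2 (a,b,d)))) \<in> DeC 1"
    using h1 unfolding x by simp_all
  have G: "(c1,(a,b,d)) \<in> DeC 1" "(c1^2*c2, eC 1 c1 (a,b,d)) \<in> DeC 2"
     "(c1*c2, eC 2 (c1^2*c2) (eC 1 c1 (a,b,d))) \<in> DeC 1"
     "(c2, eC 1 (c1*c2) (eC 2 (c1^2*c2) (eC 1 c1 (a,b,d)))) \<in> DeC 2"
    using h2 unfolding x by simp_all
  define N where "N = d*a+b^2"
  define M1 where "M1 = c2*d*a+b^2"
  define K where "K = d*a+c1^2*c2*b^2"
  define L where "L = d*a+c1^2*b^2"
  have nz: "a\<noteq>0" "b\<noteq>0" "d\<noteq>0" "c2\<noteq>0" "N\<noteq>0" "M1\<noteq>0" "c1\<noteq>0"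
    using H(1) G(1) unfolding De2 De1 N_def M1_def by auto
  have P1: "eC 2 c2 (a,b,d) = (M1*a/N, b, c2*d*N/M1)"
    using s2[OF H(1)] N_def M1_def by simp
  have P2: "eC 1 (c1*c2) (M1*a/N, b, c2*d*N/M1) = (M1*a/N, c1*c2*b, c2*d*N/M1)"
    using nz by (simp add: s1 s1S)
  have H3: "(c1^2*c2, (M1*a/N, c1*c2*b, c2*d*N/M1)) \<in> DeC 2" using H(3) P1 P2 by simp
  have e1: "c2*d*N/M1*(M1*a/N) + (c1*c2*b)^2 = c2*K"
  proof -
    have "c2*d*N/M1*(M1*a/N) + (c1*c2*b)^2 = c2*(d*a+c1^2*c2*b^2)" using nz by (simp add: field_simps power2_eq_square)
    then show ?thesis unfolding K_def .
  qed
  have e2: "c1^2*c2*(c2*d*N/M1)*(M1*a/N) + (c1*c2*b)^2 = c1^2*c2^2*N"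
  proof -
    have "c1^2*c2*(c2*d*N/M1)*(M1*a/N) + (c1*c2*b)^2 = c1^2*c2^2*(d*a+b^2)" using nz by (simp add: field_simps power2_eq_square)
    then show ?thesis unfolding N_def .
  qed
  have nzK: "K \<noteq> 0" using H3 e1 nz unfolding De2 by auto
  have P3: "eC 2 (c1^2*c2) (M1*a/N, c1*c2*b, c2*d*N/M1) = (c1^2*c2*M1*a/K, c1*c2*b, c2*d*K/M1)"
    using s2[OF H3 e1 e2] nz nzK by (simp add: field_simps power2_eq_square)
  have LHS: "app_word eC [(1, c1), (2, c1^2 * c2), (1, c1 * c2), (2, c2)] x = (c1^2*c2*M1*a/K, c1^2*c2*b, c2*d*K/M1)"
    unfolding x using P1 P2 P3 nz by (simp add: s1 s1S power2_eq_square)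
  have Q1: "eC 1 c1 (a,b,d) = (a, c1*b, d)" by (rule s1)
  have G2: "(c1^2*c2, (a, c1*b, d)) \<in> DeC 2" using G(2) Q1 by simp
  have nzL: "L \<noteq> 0" using G2 unfolding De2 L_def by (simp add: power_mult_distrib)
  have Q2: "eC 2 (c1^2*c2) (a, c1*b, d) = (c1^2*M1*a/L, c1*b, c2*d*L/M1)"
  proof -
    have g1: "d*a + (c1*b)^2 = L" unfolding L_def by (simp add: power_mult_distrib)
    have g2: "c1^2*c2*d*a + (c1*b)^2 = c1^2*M1" unfolding M1_def by (simp add: algebra_simps power_mult_distrib)
    show ?thesis using s2[OF G2 g1 g2] nz nzL by (simp add: field_simps power2_eq_square)
  qed
  have Q3: "eC 1 (c1*c2) (c1^2*M1*a/L, c1*b, c2*d*L/M1) = (c1^2*M1*a/L, c1^2*c2*b, c2*d*L/M1)"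
    using nz by (simp add: s1 s1S power2_eq_square)
  have G4: "(c2, (c1^2*M1*a/L, c1^2*c2*b, c2*d*L/M1)) \<in> DeC 2" using G(4) Q1 Q2 Q3 by simp
  have f1: "c2*d*L/M1*(c1^2*M1*a/L) + (c1^2*c2*b)^2 = c1^2*c2*K"
  proof -
    have "c2*d*L/M1*(c1^2*M1*a/L) + (c1^2*c2*b)^2 = c1^2*c2*(d*a+c1^2*c2*b^2)" using nz nzL by (simp add: field_simps power2_eq_square)
    then show ?thesis unfolding K_def .
  qed
  have f2: "c2*(c2*d*L/M1)*(c1^2*M1*a/L) + (c1^2*c2*b)^2 = c1^2*c2^2*L"
  proof -
    have "c2*(c2*d*L/M1)*(c1^2*M1*a/L) + (c1^2*c2*b)^2 = c1^2*c2^2*(d*a+c1^2*b^2)" using nz nzL by (simp add: field_simps power2_eq_square)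
    then show ?thesis unfolding L_def .
  qed
  have Q4: "eC 2 c2 (c1^2*M1*a/L, c1^2*c2*b, c2*d*L/M1) = (c1^2*c2*M1*a/K, c1^2*c2*b, c2*d*K/M1)"
    using s2[OF G4 f1 f2] nz nzL nzK by (simp add: field_simps power2_eq_square)
  have RHS: "app_word eC [(2, c2), (1, c1 * c2), (2, c1^2 * c2), (1, c1)] x = (c1^2*c2*M1*a/K, c1^2*c2*b, c2*d*K/M1)"
    unfolding x using Q1 Q2 Q3 Q4 by simp
  show "app_word eC [(1, c1), (2, c1^2 * c2), (1, c1 * c2), (2, c2)] x = app_word eC [(2, c2), (1, c1 * c2), (2, c1^2 * c2), (1, c1)] x"
    using LHS RHS by simp
qed

lemma v02: "word_eq DeC eC X3 [(0, c1), (2, c2)] [(2, c2), (0, c1)]"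
  unfolding word_eq_def
proof (intro ballI impI, elim conjE)
  fix x assume "x \<in> X3" and h1: "defd_word DeC eC [(0, c1), (2, c2)] x"
    and h2: "defd_word DeC eC [(2, c2), (0, c1)] x"
  obtain a b d where x: "x = (a,b,d)" by (cases x) auto
  have H: "(c2,(a,b,d)) \<in> DeC 2" "(c1, eC 2 c2 (a,b,d)) \<in> DeC 0"
    using h1 unfolding x by simp_all
  have G: "(c1,(a,b,d)) \<in> DeC 0" "(c2, eC 0 c1 (a,b,d)) \<in> DeC 2"
    using h2 unfolding x by simp_all
  define N where "N = d*a+b^2"
  define M1 where "M1 = c1*d*a+b^2"
  define M2 where "M2 = c2*d*a+b^2"
  define M12 where "M12 = c1*c2*d*a+b^2"
  have nz: "a\<noteq>0" "b\<noteq>0" "d\<noteq>0" "c2\<noteq>0" "N\<noteq>0" "M1\<noteq>0" "M2\<noteq>0" "c1\<noteq>0"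
    using H(1) G(1) unfolding De2 De0 N_def M1_def M2_def by auto
  have P1: "eC 2 c2 (a,b,d) = (M2*a/N, b, c2*d*N/M2)"
    using s2[OF H(1)] N_def M2_def by simp
  have H2: "(c1, (M2*a/N, b, c2*d*N/M2)) \<in> DeC 0" using H(2) P1 by simp
  have e1: "c2*d*N/M2*(M2*a/N) + b^2 = M2"
  proof -
    have "c2*d*N/M2*(M2*a/N) + b^2 = c2*d*a+b^2" using nz by (simp add: field_simps)
    then show ?thesis unfolding M2_def .
  qed
  have e2: "c1*(c2*d*N/M2)*(M2*a/N) + b^2 = M12"
  proof -
    have "c1*(c2*d*N/M2)*(M2*a/N) + b^2 = c1*c2*d*a+b^2" using nz by (simp add: field_simps)
    then show ?thesis unfolding M12_def .
  qed
  have nzM: "M12 \<noteq> 0" using H2 e2 unfolding De0 by auto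
  have LHS: "app_word eC [(0, c1), (2, c2)] x = (M12*a/(c1*N), b/c1, c2*d*N/M12)"
    unfolding x using P1 s0[OF H2 e1 e2] nz nzM by (simp add: field_simps)
  have Q1: "eC 0 c1 (a,b,d) = (M1*a/(c1*N), b/c1, d*N/M1)"
    using s0[OF G(1)] N_def M1_def by simp
  have G2: "(c2, (M1*a/(c1*N), b/c1, d*N/M1)) \<in> DeC 2" using G(2) Q1 by simp
  have f1: "d*N/M1*(M1*a/(c1*N)) + (b/c1)^2 = M1/c1^2"
  proof -
    have "d*N/M1*(M1*a/(c1*N)) + (b/c1)^2 = (c1*d*a+b^2)/c1^2" using nz by (simp add: field_simps power2_eq_square)
    then show ?thesis unfolding M1_def .
  qed
  have f2: "c2*(d*N/M1)*(M1*a/(c1*N)) + (b/c1)^2 = M12/c1^2"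
  proof -
    have "c2*(d*N/M1)*(M1*a/(c1*N)) + (b/c1)^2 = (c1*c2*d*a+b^2)/c1^2" using nz by (simp add: field_simps power2_eq_square)
    then show ?thesis unfolding M12_def .
  qed
  have RHS: "app_word eC [(2, c2), (0, c1)] x = (M12*a/(c1*N), b/c1, c2*d*N/M12)"
    unfolding x using Q1 s2[OF G2 f1 f2] nz nzM by (simp add: field_simps)
  show "app_word eC [(0, c1), (2, c2)] x = app_word eC [(2, c2), (0, c1)] x"
    using LHS RHS by simp
qed

lemma act0: "word_eq DeC eC X3 [(0, c1), (0, c2)] [(0, c1*c2)]"
  unfolding word_eq_def
proof (intro ballI impI, elim conjE)
  fix x assume "x \<in> X3" and h1: "defd_word DeC eC [(0, c1), (0, c2)] x"
    and h2: "defd_word DeC eC [(0, c1*c2)] x"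
  obtain a b d where x: "x = (a,b,d)" by (cases x) auto
  have H: "(c2,(a,b,d)) \<in> DeC 0" "(c1, eC 0 c2 (a,b,d)) \<in> DeC 0"
    using h1 unfolding x by simp_all
  have G: "(c1*c2,(a,b,d)) \<in> DeC 0"
    using h2 unfolding x by simp_all
  define N where "N = d*a+b^2"
  define M2 where "M2 = c2*d*a+b^2"
  define M12 where "M12 = c1*c2*d*a+b^2"
  have nz: "a\<noteq>0" "b\<noteq>0" "d\<noteq>0" "c2\<noteq>0" "N\<noteq>0" "M2\<noteq>0" "M12\<noteq>0" "c1\<noteq>0"
    using H(1) G(1) unfolding De0 N_def M2_def M12_def by auto
  have P1: "eC 0 c2 (a,b,d) = (M2*a/(c2*N), b/c2, d*N/M2)"
    using s0[OF H(1)] N_def M2_def by simp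
  have H2: "(c1, (M2*a/(c2*N), b/c2, d*N/M2)) \<in> DeC 0" using H(2) P1 by simp
  have e1: "d*N/M2*(M2*a/(c2*N)) + (b/c2)^2 = M2/c2^2"
  proof -
    have "d*N/M2*(M2*a/(c2*N)) + (b/c2)^2 = (c2*d*a+b^2)/c2^2" using nz by (simp add: field_simps power2_eq_square)
    then show ?thesis unfolding M2_def .
  qed
  have e2: "c1*(d*N/M2)*(M2*a/(c2*N)) + (b/c2)^2 = M12/c2^2"
  proof -
    have "c1*(d*N/M2)*(M2*a/(c2*N)) + (b/c2)^2 = (c1*c2*d*a+b^2)/c2^2" using nz by (simp add: field_simps power2_eq_square)
    then show ?thesis unfolding M12_def .
  qed
  have LHS: "app_word eC [(0, c1), (0, c2)] x = (M12*a/(c1*c2*N), b/(c1*c2), d*N/M12)"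
    unfolding x using P1 s0[OF H2 e1 e2] nz by (simp add: field_simps power2_eq_square)
  have RHS: "app_word eC [(0, c1*c2)] x = (M12*a/(c1*c2*N), b/(c1*c2), d*N/M12)"
    unfolding x using s0[OF G] N_def M12_def by simp
  show "app_word eC [(0, c1), (0, c2)] x = app_word eC [(0, c1*c2)] x"
    using LHS RHS by simp
qed

lemma act2: "word_eq DeC eC X3 [(2, c1), (2, c2)] [(2, c1*c2)]"
  unfolding word_eq_def
proof (intro ballI impI, elim conjE)
  fix x assume "x \<in> X3" and h1: "defd_word DeC eC [(2, c1), (2, c2)] x"
    and h2: "defd_word DeC eC [(2, c1*c2)] x"
  obtain a b d where x: "x = (a,b,d)" by (cases x) auto
  have H: "(c2,(a,b,d)) \<in> DeC 2" "(c1, eC 2 c2 (a,b,d)) \<in> DeC 2"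
    using h1 unfolding x by simp_all
  have G: "(c1*c2,(a,b,d)) \<in> DeC 2"
    using h2 unfolding x by simp_all
  define N where "N = d*a+b^2"
  define M2 where "M2 = c2*d*a+b^2"
  define M12 where "M12 = c1*c2*d*a+b^2"
  have nz: "a\<noteq>0" "b\<noteq>0" "d\<noteq>0" "c2\<noteq>0" "N\<noteq>0" "M2\<noteq>0" "M12\<noteq>0" "c1\<noteq>0"
    using H(1) G(1) unfolding De2 N_def M2_def M12_def by auto
  have P1: "eC 2 c2 (a,b,d) = (M2*a/N, b, c2*d*N/M2)"
    using s2[OF H(1)] N_def M2_def by simp
  have H2: "(c1, (M2*a/N, b, c2*d*N/M2)) \<in> DeC 2" using H(2) P1 by simp
  have e1: "c2*d*N/M2*(M2*a/N) + b^2 = M2"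
  proof -
    have "c2*d*N/M2*(M2*a/N) + b^2 = c2*d*a+b^2" using nz by (simp add: field_simps)
    then show ?thesis unfolding M2_def .
  qed
  have e2: "c1*(c2*d*N/M2)*(M2*a/N) + b^2 = M12"
  proof -
    have "c1*(c2*d*N/M2)*(M2*a/N) + b^2 = c1*c2*d*a+b^2" using nz by (simp add: field_simps)
    then show ?thesis unfolding M12_def .
  qed
  have LHS: "app_word eC [(2, c1), (2, c2)] x = (M12*a/N, b, c1*c2*d*N/M12)"
    unfolding x using P1 s2[OF H2 e1 e2] nz by (simp add: field_simps)
  have RHS: "app_word eC [(2, c1*c2)] x = (M12*a/N, b, c1*c2*d*N/M12)"
    unfolding x using s2[OF G] N_def M12_def by simp
  show "app_word eC [(2, c1), (2, c2)] x = app_word eC [(2, c1*c2)] x"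
    using LHS RHS by simp
qed

lemma act1: "word_eq DeC eC X3 [(1, c1), (1, c2)] [(1, c1*c2)]"
  unfolding word_eq_def by (auto simp: eC_def)


lemma lin_ev: fixes al be :: complex assumes "al \<noteq> 0"
  shows "eventually (\<lambda>t. al*t + be \<noteq> 0) (at 0)"
proof (cases "be = 0")
  case True
  have "eventually (\<lambda>t::complex. t \<noteq> 0) (at 0)" by (simp add: eventually_at_filter)
  then show ?thesis by (rule eventually_mono) (simp add: assms True)
next
  case False
  have "((\<lambda>t. al*t + be) \<longlongrightarrow> al*0 + be) (at (0::complex))"
    by (intro tendsto_intros)
  then show ?thesis using False by (intro tendsto_imp_eventually_ne) auto
qed

lemma closure_crit:
  fixes p :: "'a::topological_space"
  assumes "(f \<longlongrightarrow> p) (at (0::complex))" "eventually (\<lambda>t. f t \<in> D) (at 0)"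
  shows "p \<in> closure D"
proof (rule Lim_in_closed_set[OF closed_closure _ _ assms(1)])
  show "eventually (\<lambda>t. f t \<in> closure D) (at 0)"
    using assms(2) by (rule eventually_mono) (use closure_subset in blast)
qed simp

lemma DeC_alt: "i \<noteq> 1 \<Longrightarrow> DeC i = ((- {0}) \<times> X3) \<inter>
   {p. snd (snd (snd p)) * fst (snd p) + (fst (snd (snd p)))^2 \<noteq> 0 \<and>
       fst p * snd (snd (snd p)) * fst (snd p) + (fst (snd (snd p)))^2 \<noteq> 0}"
  by (auto simp: DeC_def X3_def)

lemma od_De: "open_dense_in (DeC i) ((- {0}) \<times> X3)"
proof (cases "i = 1")
  case True
  have "DeC i = (- {0}) \<times> X3" using True by (auto simp: DeC_def)
  then show ?thesis by (simp add: open_dense_in_def closure_subset)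
next
  case False
  let ?T = "{p::complex\<times>pt3. snd (snd (snd p)) * fst (snd p) + (fst (snd (snd p)))^2 \<noteq> 0 \<and>
       fst p * snd (snd (snd p)) * fst (snd p) + (fst (snd (snd p)))^2 \<noteq> 0}"
  have op: "open ?T"
    by (intro open_Collect_conj open_Collect_neq continuous_intros)
  have cl: "(- {0}) \<times> X3 \<subseteq> closure (DeC i)"
  proof
    fix p :: "complex \<times> pt3" assume p: "p \<in> (- {0}) \<times> X3"
    obtain c a b d where pe: "p = (c,(a,b,d))" by (cases p) auto
    have nz: "c \<noteq> 0" "a \<noteq> 0" "b \<noteq> 0" "d \<noteq> 0" using p unfolding pe X3_def by auto
    show "p \<in> closure (DeC i)"
    proof (rule closure_crit[of "\<lambda>t. (c,(a,b,d+t))"])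
      show "((\<lambda>t. (c,(a,b,d+t))) \<longlongrightarrow> p) (at 0)"
        unfolding pe by (auto intro!: tendsto_eq_intros)
      have ev: "eventually (\<lambda>t. 1*t + d \<noteq> 0) (at (0::complex))"
               "eventually (\<lambda>t. a*t + (d*a+b^2) \<noteq> 0) (at (0::complex))"
               "eventually (\<lambda>t. (c*a)*t + (c*d*a+b^2) \<noteq> 0) (at (0::complex))"
        using nz by (simp_all only: lin_ev mult_eq_0_iff one_neq_zero not_False_eq_True de_Morgan_conj de_Morgan_disj)
      show "eventually (\<lambda>t. (c,(a,b,d+t)) \<in> DeC i) (at 0)"
        using ev(1) ev(2) ev(3)
      proof eventually_elim
        case (elim t)
        then show ?case using nz False
          by (auto simp: DeC_def X3_def algebra_simps)
      qed
    qed
  qed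
  show ?thesis unfolding open_dense_in_def
    using op cl DeC_alt[OF False] by (auto simp: openin_open)
qed

lemma od_X3: "open_dense_in X3 X3"
  by (simp add: open_dense_in_def closure_subset)

lemma od_one: "open_dense_in {x\<in>X3. (1,x) \<in> DeC i} X3"
proof (cases "i = 1")
  case True
  have "{x\<in>X3. (1,x) \<in> DeC i} = X3" using True by (auto simp: DeC_def)
  then show ?thesis by (simp add: open_dense_in_def closure_subset)
next
  case False
  let ?T = "{p::pt3. snd (snd p) * fst p + (fst (snd p))^2 \<noteq> 0}"
  have eq: "{x\<in>X3. (1,x) \<in> DeC i} = X3 \<inter> ?T" using False by (auto simp: DeC_def)
  have op: "open ?T"
    by (intro open_Collect_conj open_Collect_neq continuous_intros)
  have cl: "X3 \<subseteq> closure (X3 \<inter> ?T)"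
  proof
    fix p :: pt3 assume p: "p \<in> X3"
    obtain a b d where pe: "p = (a,b,d)" by (cases p) auto
    have nz: "a \<noteq> 0" "b \<noteq> 0" "d \<noteq> 0" using p unfolding pe X3_def by auto
    show "p \<in> closure (X3 \<inter> ?T)"
    proof (rule closure_crit[of "\<lambda>t. (a,b,d+t)"])
      show "((\<lambda>t. (a,b,d+t)) \<longlongrightarrow> p) (at 0)"
        unfolding pe by (auto intro!: tendsto_eq_intros)
      have ev: "eventually (\<lambda>t. 1*t + d \<noteq> 0) (at (0::complex))"
               "eventually (\<lambda>t. a*t + (d*a+b^2) \<noteq> 0) (at (0::complex))"
        using nz by (simp_all only: lin_ev mult_eq_0_iff one_neq_zero not_False_eq_True de_Morgan_conj de_Morgan_disj)
      show "eventually (\<lambda>t. (a,b,d+t) \<in> X3 \<inter> ?T) (at 0)"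
        using ev(1) ev(2)
      proof eventually_elim
        case (elim t)
        then show ?case using nz
          by (auto simp: X3_def algebra_simps)
      qed
    qed
  qed
  show ?thesis unfolding open_dense_in_def eq
    using op cl by (auto simp: openin_open)
qed

lemma DeC_nz: "(c,(a,b,d)) \<in> DeC i \<Longrightarrow> c\<noteq>0 \<and> a\<noteq>0 \<and> b\<noteq>0 \<and> d\<noteq>0 \<and> (i \<noteq> 1 \<longrightarrow> d*a+b^2\<noteq>0 \<and> c*d*a+b^2\<noteq>0)"
  by (auto simp: DeC_def X3_def split: if_splits)

lemma L_maps: "\<forall>(c,x)\<in>DeC i. eC i c x \<in> X3"
proof (intro ballI, clarify)
  fix c a b d assume h: "(c,(a,b,d)) \<in> DeC i"
  show "eC i c (a,b,d) \<in> X3" using DeC_nz[OF h] by (auto simp: eC_def cc2_def X3_def)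
qed

lemma L_one: "\<forall>x\<in>X3. (1,x) \<in> DeC i \<longrightarrow> eC i 1 x = x"
proof (intro ballI impI, clarify)
  fix a b d assume h: "(1,(a,b,d)) \<in> DeC i"
  show "eC i 1 (a,b,d) = (a,b,d)" using DeC_nz[OF h] by (auto simp: eC_def cc2_def)
qed

lemma L_gamma: assumes "i \<in> {0,1,2}" "j \<in> {0,1,2}" "(c,x) \<in> DeC i"
  shows "gammaC j (eC i c x) = c powi cartanC21 i j * gammaC j x"
proof -
  obtain a b d where x: "x = (a,b,d)" by (cases x) auto
  define N where "N = d*a+b^2"
  define M where "M = c*d*a+b^2"
  note nz0 = DeC_nz[OF assms(3)[unfolded x]]
  have nz: "c\<noteq>0" "a\<noteq>0" "b\<noteq>0" "d\<noteq>0" "i\<noteq>1 \<Longrightarrow> N\<noteq>0" "i\<noteq>1 \<Longrightarrow> M\<noteq>0"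
    using nz0 unfolding N_def M_def by auto
  have ex: "eC i c (a,b,d) = (if i = 0 then (M*a/(c*N), b/c, d*N/M)
     else if i = 1 then (a, c*b, d) else (M*a/N, b, c*d*N/M))"
    using assms(1) assms(3)[unfolded x] s0 s1 s2 N_def M_def by auto
  from assms(1,2) consider "i=0" "j=0" | "i=0" "j=1" | "i=0" "j=2" | "i=1" "j=0" | "i=1" "j=1" | "i=1" "j=2"
     | "i=2" "j=0" | "i=2" "j=1" | "i=2" "j=2" by auto
  then show ?thesis unfolding x ex
    by cases (use nz in \<open>simp_all add: gammaC_def cartanC21_def power_int_minus field_simps power2_eq_square\<close>)
qed

lemma L_eps: assumes "i \<in> {0,1,2}" "(c,x) \<in> DeC i"
  shows "epsC i (eC i c x) = inverse c * epsC i x"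
proof -
  obtain a b d where x: "x = (a,b,d)" by (cases x) auto
  define N where "N = d*a+b^2"
  define M where "M = c*d*a+b^2"
  note nz0 = DeC_nz[OF assms(2)[unfolded x]]
  have nz: "c\<noteq>0" "a\<noteq>0" "b\<noteq>0" "d\<noteq>0" "i\<noteq>1 \<Longrightarrow> N\<noteq>0" "i\<noteq>1 \<Longrightarrow> M\<noteq>0"
    using nz0 unfolding N_def M_def by auto
  have ex: "eC i c (a,b,d) = (if i = 0 then (M*a/(c*N), b/c, d*N/M)
     else if i = 1 then (a, c*b, d) else (M*a/N, b, c*d*N/M))"
    using assms(1) assms(2)[unfolded x] s0 s1 s2 N_def M_def by auto
  from assms(1) consider "i=0" | "i=1" | "i=2" by auto
  then show ?thesis
  proof cases
    case 1
    have "d*N/M + (b/c)^2/(M*a/(c*N)) = N*(c*d*a+b^2)/(c*a*M)"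
      using nz 1 by (simp add: field_simps power2_eq_square)
    also have "... = N/(c*a)" using nz 1 unfolding M_def[symmetric] by (simp add: field_simps)
    also have "... = inverse c * (d + b^2/a)" using nz unfolding N_def by (simp add: field_simps)
    finally show ?thesis unfolding x ex using 1 by (simp add: epsC_def)
  next
    case 2 then show ?thesis unfolding x ex using nz by (simp add: epsC_def field_simps)
  next
    case 3
    have "(c*d*N/M*(M*a/N) + b^2)/((M*a/N)^2*(c*d*N/M)) = N*(c*d*a+b^2)/(c*d*a^2*M)"
      using nz 3 by (simp add: field_simps power2_eq_square)
    also have "... = N/(c*d*a^2)" using nz 3 unfolding M_def[symmetric] by (simp add: field_simps)
    also have "... = inverse c * ((d*a+b^2)/(a^2*d))" using nz unfolding N_def by (simp add: field_simps)
    finally show ?thesis unfolding x ex using 3 by (simp add: epsC_def)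
  qed
qed

lemma L_eps2: assumes "i \<in> {0,1,2}" "j \<in> {0,1,2}" "cartanC21 i j = 0" "cartanC21 j i = 0" "(c,x) \<in> DeC j"
  shows "epsC i (eC j c x) = epsC i x"
proof -
  obtain a b d where x: "x = (a,b,d)" by (cases x) auto
  define N where "N = d*a+b^2"
  define M where "M = c*d*a+b^2"
  note nz0 = DeC_nz[OF assms(5)[unfolded x]]
  have ij: "(i = 0 \<and> j = 2) \<or> (i = 2 \<and> j = 0)" using assms(1-4) by (auto simp: cartanC21_def)
  then have nz: "c\<noteq>0" "a\<noteq>0" "b\<noteq>0" "d\<noteq>0" "N\<noteq>0" "M\<noteq>0"
    using nz0 unfolding N_def M_def by auto
  have ex: "eC j c (a,b,d) = (if j = 0 then (M*a/(c*N), b/c, d*N/M)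
     else if j = 1 then (a, c*b, d) else (M*a/N, b, c*d*N/M))"
    using assms(2) assms(5)[unfolded x] s0 s1 s2 N_def M_def by auto
  from ij show ?thesis
  proof (elim disjE conjE)
    assume 1: "i = 0" "j = 2"
    have "c*d*N/M + b^2/(M*a/N) = N*(c*d*a+b^2)/(M*a)"
      using nz by (simp add: field_simps power2_eq_square)
    also have "... = N/a" using nz unfolding M_def[symmetric] by (simp add: field_simps)
    also have "... = d + b^2/a" using nz unfolding N_def by (simp add: field_simps)
    finally show ?thesis unfolding x ex using 1 by (simp add: epsC_def)
  next
    assume 1: "i = 2" "j = 0"
    have "(d*N/M*(M*a/(c*N)) + (b/c)^2)/((M*a/(c*N))^2*(d*N/M)) = N*(c*d*a+b^2)/(a^2*d*M)"
      using nz by (simp add: field_simps power2_eq_square)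
    also have "... = N/(a^2*d)" using nz unfolding M_def[symmetric] by (simp add: field_simps)
    also have "... = (d*a+b^2)/(a^2*d)" using nz unfolding N_def by (simp add: field_simps)
    finally show ?thesis unfolding x ex using 1 by (simp add: epsC_def)
  qed
qed


lemma ep_Nil[simp]: "eval_poly [] v = 0" by (simp add: eval_poly_def)
lemma ep_Cons[simp]: "eval_poly ((r,es)#P) v = of_real r * (\<Prod>k<length es. (v ! k) ^ (es ! k)) + eval_poly P v"
  by (simp add: eval_poly_def)
lemma prod4[simp]: "(\<Prod>k<length [e0,e1,e2,e3]. ([c,a,b,d] ! k) ^ ([e0,e1,e2,e3] ! k)) = c^e0*a^e1*b^e2*d^e3"
  by (simp add: lessThan_Suc numeral_eq_Suc mult_ac)
lemma prod3[simp]: "(\<Prod>k<length [e1,e2,e3]. ([a,b,d] ! k) ^ ([e1,e2,e3] ! k)) = a^e1*b^e2*d^e3"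
  by (simp add: lessThan_Suc numeral_eq_Suc mult_ac)

lemma pr4: assumes "is_pos_poly 4 P" "is_pos_poly 4 Q" "Q \<noteq> []"
  "\<And>c a b d. (c,(a,b,d)) \<in> D \<Longrightarrow> eval_poly Q [c,a,b,d] \<noteq> 0 \<and> f [c,a,b,d] = eval_poly P [c,a,b,d] / eval_poly Q [c,a,b,d]"
  shows "pos_ratio_on 4 {[c, x0, x1, x2] | c x0 x1 x2. (c, (x0, x1, x2)) \<in> D} f"
  unfolding pos_ratio_on_def using assms by blast

lemma pr3: assumes "is_pos_poly 3 P" "is_pos_poly 3 Q" "Q \<noteq> []"
  "\<And>a b d. (a,b,d) \<in> D \<Longrightarrow> eval_poly Q [a,b,d] \<noteq> 0 \<and> f [a,b,d] = eval_poly P [a,b,d] / eval_poly Q [a,b,d]"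
  shows "pos_ratio_on 3 {[x0, x1, x2] | x0 x1 x2. (x0, x1, x2) \<in> D} f"
  unfolding pos_ratio_on_def using assms by blast

lemma X3_nz: "(a,b,d) \<in> X3 \<Longrightarrow> a\<noteq>0 \<and> b\<noteq>0 \<and> d\<noteq>0" by (simp add: X3_def)

lemma pos_e00: "pos_ratio_on 4 {[c, x0, x1, x2] | c x0 x1 x2. (c, (x0, x1, x2)) \<in> DeC 0}
                 (\<lambda>v. coord3 0 (eC 0 (v ! 0) (v ! 1, v ! 2, v ! 3)))"
proof (rule pr4[of "[(1,[1,2,0,1]),(1,[0,1,2,0])]" "[(1,[1,1,0,1]),(1,[1,0,2,0])]"])
  fix c a b d assume h: "(c,(a,b,d)) \<in> DeC 0"
  note nz = DeC_nz[OF h]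
  have q: "eval_poly [(1,[1,1,0,1]),(1,[1,0,2,0])] [c,a,b,d] = c*(d*a+b^2)" by (simp add: power2_eq_square algebra_simps)
  have p: "eval_poly [(1,[1,2,0,1]),(1,[0,1,2,0])] [c,a,b,d] = (c*d*a+b^2)*a" by (simp add: power2_eq_square algebra_simps)
  show "eval_poly [(1,[1,1,0,1]),(1,[1,0,2,0])] [c,a,b,d] \<noteq> 0 \<and> coord3 0 (eC 0 ([c,a,b,d] ! 0) ([c,a,b,d] ! 1, [c,a,b,d] ! 2, [c,a,b,d] ! 3)) = eval_poly [(1,[1,2,0,1]),(1,[0,1,2,0])] [c,a,b,d] / eval_poly [(1,[1,1,0,1]),(1,[1,0,2,0])] [c,a,b,d]"
    unfolding q p using nz apply (intro conjI) apply simp by (simp add: coord3_def eC_def cc2_def field_simps)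
qed (simp_all add: is_pos_poly_def)

lemma pos_e01: "pos_ratio_on 4 {[c, x0, x1, x2] | c x0 x1 x2. (c, (x0, x1, x2)) \<in> DeC 0}
                 (\<lambda>v. coord3 1 (eC 0 (v ! 0) (v ! 1, v ! 2, v ! 3)))"
proof (rule pr4[of "[(1,[0,0,1,0])]" "[(1,[1,0,0,0])]"])
  fix c a b d assume h: "(c,(a,b,d)) \<in> DeC 0"
  note nz = DeC_nz[OF h]
  have q: "eval_poly [(1,[1,0,0,0])] [c,a,b,d] = c" by (simp add: power2_eq_square algebra_simps)
  have p: "eval_poly [(1,[0,0,1,0])] [c,a,b,d] = b" by (simp add: power2_eq_square algebra_simps)
  show "eval_poly [(1,[1,0,0,0])] [c,a,b,d] \<noteq> 0 \<and> coord3 1 (eC 0 ([c,a,b,d] ! 0) ([c,a,b,d] ! 1, [c,a,b,d] ! 2, [c,a,b,d] ! 3)) = eval_poly [(1,[0,0,1,0])] [c,a,b,d] / eval_poly [(1,[1,0,0,0])] [c,a,b,d]"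
    unfolding q p using nz apply (intro conjI) apply simp by (simp add: coord3_def eC_def cc2_def field_simps)
qed (simp_all add: is_pos_poly_def)

lemma pos_e02: "pos_ratio_on 4 {[c, x0, x1, x2] | c x0 x1 x2. (c, (x0, x1, x2)) \<in> DeC 0}
                 (\<lambda>v. coord3 2 (eC 0 (v ! 0) (v ! 1, v ! 2, v ! 3)))"
proof (rule pr4[of "[(1,[0,1,0,2]),(1,[0,0,2,1])]" "[(1,[1,1,0,1]),(1,[0,0,2,0])]"])
  fix c a b d assume h: "(c,(a,b,d)) \<in> DeC 0"
  note nz = DeC_nz[OF h]
  have q: "eval_poly [(1,[1,1,0,1]),(1,[0,0,2,0])] [c,a,b,d] = c*d*a+b^2" by (simp add: power2_eq_square algebra_simps)
  have p: "eval_poly [(1,[0,1,0,2]),(1,[0,0,2,1])] [c,a,b,d] = d*(d*a+b^2)" by (simp add: power2_eq_square algebra_simps)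
  show "eval_poly [(1,[1,1,0,1]),(1,[0,0,2,0])] [c,a,b,d] \<noteq> 0 \<and> coord3 2 (eC 0 ([c,a,b,d] ! 0) ([c,a,b,d] ! 1, [c,a,b,d] ! 2, [c,a,b,d] ! 3)) = eval_poly [(1,[0,1,0,2]),(1,[0,0,2,1])] [c,a,b,d] / eval_poly [(1,[1,1,0,1]),(1,[0,0,2,0])] [c,a,b,d]"
    unfolding q p using nz apply (intro conjI) apply simp by (simp add: coord3_def eC_def cc2_def field_simps)
qed (simp_all add: is_pos_poly_def)

lemma pos_e10: "pos_ratio_on 4 {[c, x0, x1, x2] | c x0 x1 x2. (c, (x0, x1, x2)) \<in> DeC 1}
                 (\<lambda>v. coord3 0 (eC 1 (v ! 0) (v ! 1, v ! 2, v ! 3)))"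
proof (rule pr4[of "[(1,[0,1,0,0])]" "[(1,[0,0,0,0])]"])
  fix c a b d assume h: "(c,(a,b,d)) \<in> DeC 1"
  note nz = DeC_nz[OF h]
  have q: "eval_poly [(1,[0,0,0,0])] [c,a,b,d] = 1" by (simp add: power2_eq_square algebra_simps)
  have p: "eval_poly [(1,[0,1,0,0])] [c,a,b,d] = a" by (simp add: power2_eq_square algebra_simps)
  show "eval_poly [(1,[0,0,0,0])] [c,a,b,d] \<noteq> 0 \<and> coord3 0 (eC 1 ([c,a,b,d] ! 0) ([c,a,b,d] ! 1, [c,a,b,d] ! 2, [c,a,b,d] ! 3)) = eval_poly [(1,[0,1,0,0])] [c,a,b,d] / eval_poly [(1,[0,0,0,0])] [c,a,b,d]"
    unfolding q p using nz apply (intro conjI) apply simp by (simp add: coord3_def eC_def cc2_def field_simps)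
qed (simp_all add: is_pos_poly_def)

lemma pos_e11: "pos_ratio_on 4 {[c, x0, x1, x2] | c x0 x1 x2. (c, (x0, x1, x2)) \<in> DeC 1}
                 (\<lambda>v. coord3 1 (eC 1 (v ! 0) (v ! 1, v ! 2, v ! 3)))"
proof (rule pr4[of "[(1,[1,0,1,0])]" "[(1,[0,0,0,0])]"])
  fix c a b d assume h: "(c,(a,b,d)) \<in> DeC 1"
  note nz = DeC_nz[OF h]
  have q: "eval_poly [(1,[0,0,0,0])] [c,a,b,d] = 1" by (simp add: power2_eq_square algebra_simps)
  have p: "eval_poly [(1,[1,0,1,0])] [c,a,b,d] = c*b" by (simp add: power2_eq_square algebra_simps)
  show "eval_poly [(1,[0,0,0,0])] [c,a,b,d] \<noteq> 0 \<and> coord3 1 (eC 1 ([c,a,b,d] ! 0) ([c,a,b,d] ! 1, [c,a,b,d] ! 2, [c,a,b,d] ! 3)) = eval_poly [(1,[1,0,1,0])] [c,a,b,d] / eval_poly [(1,[0,0,0,0])] [c,a,b,d]"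
    unfolding q p using nz apply (intro conjI) apply simp by (simp add: coord3_def eC_def cc2_def field_simps)
qed (simp_all add: is_pos_poly_def)

lemma pos_e12: "pos_ratio_on 4 {[c, x0, x1, x2] | c x0 x1 x2. (c, (x0, x1, x2)) \<in> DeC 1}
                 (\<lambda>v. coord3 2 (eC 1 (v ! 0) (v ! 1, v ! 2, v ! 3)))"
proof (rule pr4[of "[(1,[0,0,0,1])]" "[(1,[0,0,0,0])]"])
  fix c a b d assume h: "(c,(a,b,d)) \<in> DeC 1"
  note nz = DeC_nz[OF h]
  have q: "eval_poly [(1,[0,0,0,0])] [c,a,b,d] = 1" by (simp add: power2_eq_square algebra_simps)
  have p: "eval_poly [(1,[0,0,0,1])] [c,a,b,d] = d" by (simp add: power2_eq_square algebra_simps)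
  show "eval_poly [(1,[0,0,0,0])] [c,a,b,d] \<noteq> 0 \<and> coord3 2 (eC 1 ([c,a,b,d] ! 0) ([c,a,b,d] ! 1, [c,a,b,d] ! 2, [c,a,b,d] ! 3)) = eval_poly [(1,[0,0,0,1])] [c,a,b,d] / eval_poly [(1,[0,0,0,0])] [c,a,b,d]"
    unfolding q p using nz apply (intro conjI) apply simp by (simp add: coord3_def eC_def cc2_def field_simps)
qed (simp_all add: is_pos_poly_def)

lemma pos_e20: "pos_ratio_on 4 {[c, x0, x1, x2] | c x0 x1 x2. (c, (x0, x1, x2)) \<in> DeC 2}
                 (\<lambda>v. coord3 0 (eC 2 (v ! 0) (v ! 1, v ! 2, v ! 3)))"
proof (rule pr4[of "[(1,[1,2,0,1]),(1,[0,1,2,0])]" "[(1,[0,1,0,1]),(1,[0,0,2,0])]"])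
  fix c a b d assume h: "(c,(a,b,d)) \<in> DeC 2"
  note nz = DeC_nz[OF h]
  have q: "eval_poly [(1,[0,1,0,1]),(1,[0,0,2,0])] [c,a,b,d] = d*a+b^2" by (simp add: power2_eq_square algebra_simps)
  have p: "eval_poly [(1,[1,2,0,1]),(1,[0,1,2,0])] [c,a,b,d] = (c*d*a+b^2)*a" by (simp add: power2_eq_square algebra_simps)
  show "eval_poly [(1,[0,1,0,1]),(1,[0,0,2,0])] [c,a,b,d] \<noteq> 0 \<and> coord3 0 (eC 2 ([c,a,b,d] ! 0) ([c,a,b,d] ! 1, [c,a,b,d] ! 2, [c,a,b,d] ! 3)) = eval_poly [(1,[1,2,0,1]),(1,[0,1,2,0])] [c,a,b,d] / eval_poly [(1,[0,1,0,1]),(1,[0,0,2,0])] [c,a,b,d]"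
    unfolding q p using nz apply (intro conjI) apply simp by (simp add: coord3_def eC_def cc2_def field_simps)
qed (simp_all add: is_pos_poly_def)

lemma pos_e21: "pos_ratio_on 4 {[c, x0, x1, x2] | c x0 x1 x2. (c, (x0, x1, x2)) \<in> DeC 2}
                 (\<lambda>v. coord3 1 (eC 2 (v ! 0) (v ! 1, v ! 2, v ! 3)))"
proof (rule pr4[of "[(1,[0,0,1,0])]" "[(1,[0,0,0,0])]"])
  fix c a b d assume h: "(c,(a,b,d)) \<in> DeC 2"
  note nz = DeC_nz[OF h]
  have q: "eval_poly [(1,[0,0,0,0])] [c,a,b,d] = 1" by (simp add: power2_eq_square algebra_simps)
  have p: "eval_poly [(1,[0,0,1,0])] [c,a,b,d] = b" by (simp add: power2_eq_square algebra_simps)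
  show "eval_poly [(1,[0,0,0,0])] [c,a,b,d] \<noteq> 0 \<and> coord3 1 (eC 2 ([c,a,b,d] ! 0) ([c,a,b,d] ! 1, [c,a,b,d] ! 2, [c,a,b,d] ! 3)) = eval_poly [(1,[0,0,1,0])] [c,a,b,d] / eval_poly [(1,[0,0,0,0])] [c,a,b,d]"
    unfolding q p using nz apply (intro conjI) apply simp by (simp add: coord3_def eC_def cc2_def field_simps)
qed (simp_all add: is_pos_poly_def)

lemma pos_e22: "pos_ratio_on 4 {[c, x0, x1, x2] | c x0 x1 x2. (c, (x0, x1, x2)) \<in> DeC 2}
                 (\<lambda>v. coord3 2 (eC 2 (v ! 0) (v ! 1, v ! 2, v ! 3)))"
proof (rule pr4[of "[(1,[1,1,0,2]),(1,[1,0,2,1])]" "[(1,[1,1,0,1]),(1,[0,0,2,0])]"])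
  fix c a b d assume h: "(c,(a,b,d)) \<in> DeC 2"
  note nz = DeC_nz[OF h]
  have q: "eval_poly [(1,[1,1,0,1]),(1,[0,0,2,0])] [c,a,b,d] = c*d*a+b^2" by (simp add: power2_eq_square algebra_simps)
  have p: "eval_poly [(1,[1,1,0,2]),(1,[1,0,2,1])] [c,a,b,d] = c*d*(d*a+b^2)" by (simp add: power2_eq_square algebra_simps)
  show "eval_poly [(1,[1,1,0,1]),(1,[0,0,2,0])] [c,a,b,d] \<noteq> 0 \<and> coord3 2 (eC 2 ([c,a,b,d] ! 0) ([c,a,b,d] ! 1, [c,a,b,d] ! 2, [c,a,b,d] ! 3)) = eval_poly [(1,[1,1,0,2]),(1,[1,0,2,1])] [c,a,b,d] / eval_poly [(1,[1,1,0,1]),(1,[0,0,2,0])] [c,a,b,d]"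
    unfolding q p using nz apply (intro conjI) apply simp by (simp add: coord3_def eC_def cc2_def field_simps)
qed (simp_all add: is_pos_poly_def)

lemma pos_gammaC0: "pos_ratio_on 3 {[x0, x1, x2] | x0 x1 x2. (x0, x1, x2) \<in> X3}
                 (\<lambda>v. gammaC 0 (v ! 0, v ! 1, v ! 2))"
proof (rule pr3[of "[(1,[0,0,0])]" "[(1,[0,2,0])]"])
  fix a b d assume h: "(a,b,d) \<in> X3"
  note nz = X3_nz[OF h]
  have q: "eval_poly [(1,[0,2,0])] [a,b,d] = b^2" by (simp add: power2_eq_square algebra_simps)
  have p: "eval_poly [(1,[0,0,0])] [a,b,d] = 1" by (simp add: power2_eq_square algebra_simps)
  show "eval_poly [(1,[0,2,0])] [a,b,d] \<noteq> 0 \<and> gammaC 0 ([a,b,d] ! 0, [a,b,d] ! 1, [a,b,d] ! 2) = eval_poly [(1,[0,0,0])] [a,b,d] / eval_poly [(1,[0,2,0])] [a,b,d]"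
    unfolding q p using nz by (simp add: gammaC_def field_simps)
qed (simp_all add: is_pos_poly_def)

lemma pos_gammaC1: "pos_ratio_on 3 {[x0, x1, x2] | x0 x1 x2. (x0, x1, x2) \<in> X3}
                 (\<lambda>v. gammaC 1 (v ! 0, v ! 1, v ! 2))"
proof (rule pr3[of "[(1,[0,2,0])]" "[(1,[1,0,1])]"])
  fix a b d assume h: "(a,b,d) \<in> X3"
  note nz = X3_nz[OF h]
  have q: "eval_poly [(1,[1,0,1])] [a,b,d] = a*d" by (simp add: power2_eq_square algebra_simps)
  have p: "eval_poly [(1,[0,2,0])] [a,b,d] = b^2" by (simp add: power2_eq_square algebra_simps)
  show "eval_poly [(1,[1,0,1])] [a,b,d] \<noteq> 0 \<and> gammaC 1 ([a,b,d] ! 0, [a,b,d] ! 1, [a,b,d] ! 2) = eval_poly [(1,[0,2,0])] [a,b,d] / eval_poly [(1,[1,0,1])] [a,b,d]"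
    unfolding q p using nz by (simp add: gammaC_def field_simps)
qed (simp_all add: is_pos_poly_def)

lemma pos_gammaC2: "pos_ratio_on 3 {[x0, x1, x2] | x0 x1 x2. (x0, x1, x2) \<in> X3}
                 (\<lambda>v. gammaC 2 (v ! 0, v ! 1, v ! 2))"
proof (rule pr3[of "[(1,[2,0,2])]" "[(1,[0,2,0])]"])
  fix a b d assume h: "(a,b,d) \<in> X3"
  note nz = X3_nz[OF h]
  have q: "eval_poly [(1,[0,2,0])] [a,b,d] = b^2" by (simp add: power2_eq_square algebra_simps)
  have p: "eval_poly [(1,[2,0,2])] [a,b,d] = a^2*d^2" by (simp add: power2_eq_square algebra_simps)
  show "eval_poly [(1,[0,2,0])] [a,b,d] \<noteq> 0 \<and> gammaC 2 ([a,b,d] ! 0, [a,b,d] ! 1, [a,b,d] ! 2) = eval_poly [(1,[2,0,2])] [a,b,d] / eval_poly [(1,[0,2,0])] [a,b,d]"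
    unfolding q p using nz by (simp add: gammaC_def field_simps)
qed (simp_all add: is_pos_poly_def)

lemma pos_epsC0: "pos_ratio_on 3 {[x0, x1, x2] | x0 x1 x2. (x0, x1, x2) \<in> X3}
                 (\<lambda>v. epsC 0 (v ! 0, v ! 1, v ! 2))"
proof (rule pr3[of "[(1,[1,0,1]),(1,[0,2,0])]" "[(1,[1,0,0])]"])
  fix a b d assume h: "(a,b,d) \<in> X3"
  note nz = X3_nz[OF h]
  have q: "eval_poly [(1,[1,0,0])] [a,b,d] = a" by (simp add: power2_eq_square algebra_simps)
  have p: "eval_poly [(1,[1,0,1]),(1,[0,2,0])] [a,b,d] = d*a+b^2" by (simp add: power2_eq_square algebra_simps)
  show "eval_poly [(1,[1,0,0])] [a,b,d] \<noteq> 0 \<and> epsC 0 ([a,b,d] ! 0, [a,b,d] ! 1, [a,b,d] ! 2) = eval_poly [(1,[1,0,1]),(1,[0,2,0])] [a,b,d] / eval_poly [(1,[1,0,0])] [a,b,d]"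
    unfolding q p using nz by (simp add: epsC_def field_simps)
qed (simp_all add: is_pos_poly_def)

lemma pos_epsC1: "pos_ratio_on 3 {[x0, x1, x2] | x0 x1 x2. (x0, x1, x2) \<in> X3}
                 (\<lambda>v. epsC 1 (v ! 0, v ! 1, v ! 2))"
proof (rule pr3[of "[(1,[1,0,0])]" "[(1,[0,1,0])]"])
  fix a b d assume h: "(a,b,d) \<in> X3"
  note nz = X3_nz[OF h]
  have q: "eval_poly [(1,[0,1,0])] [a,b,d] = b" by (simp add: power2_eq_square algebra_simps)
  have p: "eval_poly [(1,[1,0,0])] [a,b,d] = a" by (simp add: power2_eq_square algebra_simps)
  show "eval_poly [(1,[0,1,0])] [a,b,d] \<noteq> 0 \<and> epsC 1 ([a,b,d] ! 0, [a,b,d] ! 1, [a,b,d] ! 2) = eval_poly [(1,[1,0,0])] [a,b,d] / eval_poly [(1,[0,1,0])] [a,b,d]"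
    unfolding q p using nz by (simp add: epsC_def field_simps)
qed (simp_all add: is_pos_poly_def)

lemma pos_epsC2: "pos_ratio_on 3 {[x0, x1, x2] | x0 x1 x2. (x0, x1, x2) \<in> X3}
                 (\<lambda>v. epsC 2 (v ! 0, v ! 1, v ! 2))"
proof (rule pr3[of "[(1,[1,0,1]),(1,[0,2,0])]" "[(1,[2,0,1])]"])
  fix a b d assume h: "(a,b,d) \<in> X3"
  note nz = X3_nz[OF h]
  have q: "eval_poly [(1,[2,0,1])] [a,b,d] = a^2*d" by (simp add: power2_eq_square algebra_simps)
  have p: "eval_poly [(1,[1,0,1]),(1,[0,2,0])] [a,b,d] = d*a+b^2" by (simp add: power2_eq_square algebra_simps)
  show "eval_poly [(1,[2,0,1])] [a,b,d] \<noteq> 0 \<and> epsC 2 ([a,b,d] ! 0, [a,b,d] ! 1, [a,b,d] ! 2) = eval_poly [(1,[1,0,1]),(1,[0,2,0])] [a,b,d] / eval_poly [(1,[2,0,1])] [a,b,d]"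
    unfolding q p using nz by (simp add: epsC_def field_simps)
qed (simp_all add: is_pos_poly_def)

lemma word_eq_sym: "word_eq De e X v w \<Longrightarrow> word_eq De e X w v"
  unfolding word_eq_def by auto

lemma L_act: "i \<in> {0,1,2} \<Longrightarrow> \<forall>c1 c2. c1 \<noteq> 0 \<longrightarrow> c2 \<noteq> 0 \<longrightarrow> word_eq DeC eC X3 [(i, c1), (i, c2)] [(i, c1 * c2)]"
  using act0 act1 act2 by auto

lemma L_verma: assumes "i \<in> {0,1,2}" "j \<in> {0,1,2}" "c1 \<noteq> 0" "c2 \<noteq> 0"
  shows "(cartanC21 i j = 0 \<and> cartanC21 j i = 0 \<longrightarrow>
              word_eq DeC eC X3 [(i, c1), (j, c2)] [(j, c2), (i, c1)]) \<and>
           (cartanC21 i j = -1 \<and> cartanC21 j i = -1 \<longrightarrow>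
              word_eq DeC eC X3 [(i, c1), (j, c1 * c2), (i, c2)] [(j, c2), (i, c1 * c2), (j, c1)]) \<and>
           (cartanC21 i j = -2 \<and> cartanC21 j i = -1 \<longrightarrow>
              word_eq DeC eC X3 [(i, c1), (j, c1^2 * c2), (i, c1 * c2), (j, c2)]
                             [(j, c2), (i, c1 * c2), (j, c1^2 * c2), (i, c1)]) \<and>
           (cartanC21 i j = -3 \<and> cartanC21 j i = -1 \<longrightarrow>
              word_eq DeC eC X3
                [(i, c1), (j, c1^3 * c2), (i, c1^2 * c2), (j, c1^3 * c2^2), (i, c1 * c2), (j, c2)]
                [(j, c2), (i, c1 * c2), (j, c1^3 * c2^2), (i, c1^2 * c2), (j, c1^3 * c2), (i, c1)])"
  using assms v10 v12 v02 word_eq_sym[OF v02[of c2 c1]] by (auto simp: cartanC21_def)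

lemma L_gamma': "i \<in> {0,1,2} \<Longrightarrow> j \<in> {0,1,2} \<Longrightarrow> p \<in> DeC i \<Longrightarrow>
  (case p of (c, x) \<Rightarrow> x \<in> X3 \<longrightarrow> eC i c x \<in> X3 \<longrightarrow>
     gammaC j (eC i c x) = c powi cartanC21 i j * gammaC j x)"
proof -
  assume a: "i \<in> {0,1,2}" "j \<in> {0,1,2}" "p \<in> DeC i"
  obtain c x where p: "p = (c,x)" by (cases p) auto
  show ?thesis using L_gamma[of i j c x] a p by simp
qed

lemma L_eps': "i \<in> {0,1,2} \<Longrightarrow> p \<in> DeC i \<Longrightarrow>
  (case p of (c, x) \<Rightarrow> x \<in> X3 \<longrightarrow> eC i c x \<in> X3 \<longrightarrow>
     epsC i (eC i c x) = inverse c * epsC i x)"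
proof -
  assume a: "i \<in> {0,1,2}" "p \<in> DeC i"
  obtain c x where p: "p = (c,x)" by (cases p) auto
  show ?thesis using L_eps[of i c x] a p by simp
qed

lemma L_eps2': assumes "i \<in> {0,1,2}" "j \<in> {0,1,2}"
  shows "cartanC21 i j = 0 \<and> cartanC21 j i = 0 \<longrightarrow>
     (\<forall>(c, x)\<in>DeC j. x \<in> X3 \<longrightarrow> eC j c x \<in> X3 \<longrightarrow> epsC i (eC j c x) = epsC i x)"
proof (intro impI ballI, elim conjE)
  fix p assume h: "cartanC21 i j = 0" "cartanC21 j i = 0" "p \<in> DeC j"
  obtain c x where p: "p = (c,x)" by (cases p) auto
  show "case p of (c, x) \<Rightarrow> x \<in> X3 \<longrightarrow> eC j c x \<in> X3 \<longrightarrow> epsC i (eC j c x) = epsC i x"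
    using L_eps2[OF assms h(1) h(2), of c x] h(3) p by simp
qed

lemma POS_e: assumes "i \<in> {0,1,2}" "k < 3"
  shows "pos_ratio_on 4 {[c, x0, x1, x2] | c x0 x1 x2. (c, (x0, x1, x2)) \<in> DeC i}
                 (\<lambda>v. coord3 k (eC i (v ! 0) (v ! 1, v ! 2, v ! 3)))"
proof -
  have "k = 0 \<or> k = 1 \<or> k = 2" using assms(2) by auto
  then show ?thesis using assms(1) pos_e00 pos_e01 pos_e02 pos_e10 pos_e11 pos_e12 pos_e20 pos_e21 pos_e22
    by auto
qed

lemma POS_g: assumes "i \<in> {0,1,2}"
  shows "pos_ratio_on 3 {[x0, x1, x2] | x0 x1 x2. (x0, x1, x2) \<in> X3} (\<lambda>v. gammaC i (v ! 0, v ! 1, v ! 2))"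
  using assms pos_gammaC0 pos_gammaC1 pos_gammaC2 by auto

lemma POS_eps: assumes "i \<in> {0,1,2}"
  shows "pos_ratio_on 3 {[x0, x1, x2] | x0 x1 x2. (x0, x1, x2) \<in> X3} (\<lambda>v. epsC i (v ! 0, v ! 1, v ! 2))"
  using assms pos_epsC0 pos_epsC1 pos_epsC2 by auto

theorem mainTheorem3:
  shows "positive_geometric_crystal3 cartanC21 {0, 1, 2} X3 DeC eC
           (\<lambda>_. X3) gammaC (\<lambda>_. X3) epsC"
  unfolding positive_geometric_crystal3_def geometric_crystal_def
  apply (intro conjI ballI)
  subgoal by (rule od_De)
  subgoal for i x using L_maps[of i] by blast
  subgoal by (rule od_X3)
  subgoal by (rule od_X3)
  subgoal using L_one by blast
  subgoal by (rule L_act)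
  subgoal by (rule od_one)
  subgoal for i j x by (rule L_gamma')
  subgoal for i x by (rule L_eps')
  subgoal for i j by (rule L_eps2')
  subgoal for i j using L_verma[of i j] by blast
  subgoal for i using POS_e[of i] by blast
  subgoal for i by (rule POS_g)
  subgoal for i by (rule POS_eps)
  done

end
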